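(* Let $G$ be a finite simple graph with $n$ vertices, $m$ edges, and degree sequence $d(1),\dots,d(n)$. Then \[ \left(6k_3(G)-\sum_{i=1}^n d^2(i)+nm\right)\, bk(G)\;\ge\; n\,k_3(G)+8k_4(G)+2k_4^{(3)}(G). \]
   Context: A book of size $q$ is a set of $q$ triangles sharing a common edge; the booksize $bk(G)$ is the size of the largest book in $G$, i.e. the maximum over edges $uv$ of the number of common neighbours of $u$ and $v$. $k_s(G)$ denotes the number of $s$-cliques of $G$ (so $k_3(G)$ is the number of triangles and $k_4(G)$ the number of copies of $K_4$). $k_4^{(3)}(G)$ denotes the number of 4-vertex subsets of $V(G)$ inducing a subgraph isomorphic to a triangle together with an isolated vertex. *)

theory Defs
  imports Main
begin

definition simple_graph :: "'a set \<Rightarrow> 'a set set \<Rightarrow> bool" where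
  "simple_graph V E \<longleftrightarrow> finite V \<and> (\<forall>e\<in>E. e \<subseteq> V \<and> card e = 2)"

definition neighbours :: "'a set set \<Rightarrow> 'a \<Rightarrow> 'a set" where
  "neighbours E v = {u. {u, v} \<in> E}"

definition degree :: "'a set set \<Rightarrow> 'a \<Rightarrow> nat" where
  "degree E v = card (neighbours E v)"

definition cliques :: "'a set \<Rightarrow> 'a set set \<Rightarrow> nat \<Rightarrow> 'a set set" where
  "cliques V E s = {S. S \<subseteq> V \<and> card S = s \<and> (\<forall>u\<in>S. \<forall>v\<in>S. u \<noteq> v \<longrightarrow> {u, v} \<in> E)}"

definition k_s :: "'a set \<Rightarrow> 'a set set \<Rightarrow> nat \<Rightarrow> nat" where
  "k_s V E s = card (cliques V E s)"

definition booksize :: "'a set \<Rightarrow> 'a set set \<Rightarrow> nat" where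
  "booksize V E = Max (insert 0 {card (neighbours E u \<inter> neighbours E v) | u v. {u, v} \<in> E})"

definition k4_3 :: "'a set \<Rightarrow> 'a set set \<Rightarrow> nat" where
  "k4_3 V E = card {S. S \<subseteq> V \<and> card S = 4 \<and>
      (\<exists>T w. S = insert w T \<and> w \<notin> T \<and> T \<in> cliques V E 3 \<and>
             (\<forall>t\<in>T. {w, t} \<notin> E))}"

end

theory Submission imports Defs "HOL-Combinatorics.Multiset_Permutations" begin

lemma fiber3:
  assumes "S \<subseteq> V" "card S = 3"
  shows "card {t \<in> V\<times>V\<times>V. (case t of (u,v,w) \<Rightarrow> {u,v,w}) = S} = 6"
proof -
  let ?F = "{t \<in> V\<times>V\<times>V. (case t of (u,v,w) \<Rightarrow> {u,v,w}) = S}"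
  let ?g = "\<lambda>(u,v,w). [u,v,w]"
  have inj: "inj_on ?g ?F" by (auto simp: inj_on_def)
  have img: "?g ` ?F = permutations_of_set S"
  proof
    show "?g ` ?F \<subseteq> permutations_of_set S"
    proof
      fix xs assume "xs \<in> ?g ` ?F"
      then obtain t where t: "t \<in> ?F" "xs = ?g t" by blast
      obtain u v w where "t = (u,v,w)" by (cases t)
      with t have "xs = [u,v,w]" "{u,v,w} = S" by auto
      moreover have "distinct xs" by (rule card_distinct) (use calculation assms in simp)
      ultimately show "xs \<in> permutations_of_set S" by (simp add: permutations_of_set_def)
    qed
    show "permutations_of_set S \<subseteq> ?g ` ?F"
    proof
      fix xs assume "xs \<in> permutations_of_set S"
      hence xs: "set xs = S" "distinct xs" by (auto simp: permutations_of_set_def)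
      hence "length xs = 3" using assms distinct_card by metis
      then obtain a b c where "xs = [a,b,c]" by (auto simp: numeral_eq_Suc length_Suc_conv)
      then show "xs \<in> ?g ` ?F" using xs assms by (auto intro!: image_eqI[where x="(a,b,c)"])
    qed
  qed
  have fS: "finite S" using assms(2) card.infinite by fastforce
  have "card ?F = card (permutations_of_set S)" using card_image[OF inj] img by simp
  also have "\<dots> = 6" using fS assms by (simp add: fact_numeral)
  finally show ?thesis .
qed

lemma fiber4:
  assumes "S \<subseteq> V" "card S = 4"
  shows "card {t \<in> V\<times>V\<times>V\<times>V. (case t of (u,v,w,x) \<Rightarrow> {u,v,w,x}) = S} = 24"
proof -
  let ?F = "{t \<in> V\<times>V\<times>V\<times>V. (case t of (u,v,w,x) \<Rightarrow> {u,v,w,x}) = S}"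
  let ?g = "\<lambda>(u,v,w,x). [u,v,w,x]"
  have inj: "inj_on ?g ?F" by (auto simp: inj_on_def)
  have img: "?g ` ?F = permutations_of_set S"
  proof
    show "?g ` ?F \<subseteq> permutations_of_set S"
    proof
      fix xs assume "xs \<in> ?g ` ?F"
      then obtain t where t: "t \<in> ?F" "xs = ?g t" by blast
      obtain u v w x where "t = (u,v,w,x)" by (cases t)
      with t have "xs = [u,v,w,x]" "{u,v,w,x} = S" by auto
      moreover have "distinct xs" by (rule card_distinct) (use calculation assms in simp)
      ultimately show "xs \<in> permutations_of_set S" by (simp add: permutations_of_set_def)
    qed
    show "permutations_of_set S \<subseteq> ?g ` ?F"
    proof
      fix xs assume "xs \<in> permutations_of_set S"
      hence xs: "set xs = S" "distinct xs" by (auto simp: permutations_of_set_def)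
      hence "length xs = 4" using assms distinct_card by metis
      then obtain a b c d where "xs = [a,b,c,d]" by (auto simp: numeral_eq_Suc length_Suc_conv)
      then show "xs \<in> ?g ` ?F" using xs assms by (auto intro!: image_eqI[where x="(a,b,c,d)"])
    qed
  qed
  have fS: "finite S" using assms(2) card.infinite by fastforce
  have "card ?F = card (permutations_of_set S)" using card_image[OF inj] img by simp
  also have "\<dots> = 24" using fS assms by (simp add: fact_numeral)
  finally show ?thesis .
qed

lemma fiber2:
  assumes "S \<subseteq> V" "card S = 2"
  shows "card {t \<in> V\<times>V. (case t of (u,v) \<Rightarrow> {u,v}) = S} = 2"
proof -
  let ?F = "{t \<in> V\<times>V. (case t of (u,v) \<Rightarrow> {u,v}) = S}"
  let ?g = "\<lambda>(u,v). [u,v]"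
  have inj: "inj_on ?g ?F" by (auto simp: inj_on_def)
  have img: "?g ` ?F = permutations_of_set S"
  proof
    show "?g ` ?F \<subseteq> permutations_of_set S"
    proof
      fix xs assume "xs \<in> ?g ` ?F"
      then obtain t where t: "t \<in> ?F" "xs = ?g t" by blast
      obtain u v where "t = (u,v)" by (cases t)
      with t have "xs = [u,v]" "{u,v} = S" by auto
      moreover have "distinct xs" by (rule card_distinct) (use calculation assms in simp)
      ultimately show "xs \<in> permutations_of_set S" by (simp add: permutations_of_set_def)
    qed
    show "permutations_of_set S \<subseteq> ?g ` ?F"
    proof
      fix xs assume "xs \<in> permutations_of_set S"
      hence xs: "set xs = S" "distinct xs" by (auto simp: permutations_of_set_def)
      hence "length xs = 2" using assms distinct_card by metis
      then obtain a b where "xs = [a,b]" by (auto simp: numeral_eq_Suc length_Suc_conv)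
      then show "xs \<in> ?g ` ?F" using xs assms by (auto intro!: image_eqI[where x="(a,b)"])
    qed
  qed
  have fS: "finite S" using assms(2) card.infinite by fastforce
  have "card ?F = card (permutations_of_set S)" using card_image[OF inj] img by simp
  also have "\<dots> = 2" using fS assms by (simp add: fact_numeral)
  finally show ?thesis .
qed


lemma G3:
  fixes h :: "'a set \<Rightarrow> int"
  assumes fin: "finite V" and C: "\<And>S. S\<in>C \<Longrightarrow> S \<subseteq> V \<and> card S = 3"
  shows "(\<Sum>u\<in>V. \<Sum>v\<in>V. \<Sum>w\<in>V. of_bool ({u,v,w} \<in> C) * h {u,v,w}) = 6 * (\<Sum>S\<in>C. h S)"
proof -
  let ?f = "\<lambda>t. case t of (u,v,w) \<Rightarrow> {u,v,w}"
  let ?T = "{t \<in> V\<times>V\<times>V. ?f t \<in> C}"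
  have fC: "finite C" using C fin by (meson Pow_iff finite_Pow_iff finite_subset subsetI)
  have "(\<Sum>u\<in>V. \<Sum>v\<in>V. \<Sum>w\<in>V. of_bool ({u,v,w} \<in> C) * h {u,v,w})
      = (\<Sum>t\<in>V\<times>V\<times>V. of_bool (?f t \<in> C) * h (?f t))"
    by (simp only: sum.cartesian_product split_def prod.case fst_conv snd_conv)
  also have "\<dots> = (\<Sum>t\<in>V\<times>V\<times>V. if ?f t \<in> C then h (?f t) else 0)"
    by (rule sum.cong) auto
  also have "\<dots> = (\<Sum>t\<in>?T. h (?f t))"
    by (rule sum.inter_filter[symmetric]) (use fin in auto)
  also have "\<dots> = (\<Sum>S\<in>C. \<Sum>t\<in>{t. t \<in> ?T \<and> ?f t = S}. h (?f t))"
    by (rule sum.group[symmetric]) (use fin fC in auto)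
  also have "\<dots> = (\<Sum>S\<in>C. 6 * h S)"
  proof (rule sum.cong)
    fix S assume S: "S \<in> C"
    have eq: "{t. t \<in> ?T \<and> ?f t = S} = {t \<in> V\<times>V\<times>V. ?f t = S}" using S by auto
    have "(\<Sum>t\<in>{t. t \<in> ?T \<and> ?f t = S}. h (?f t)) = (\<Sum>t\<in>{t \<in> V\<times>V\<times>V. ?f t = S}. h S)"
      unfolding eq by (rule sum.cong) auto
    also have "\<dots> = 6 * h S" using fiber3[of S V] C[OF S] by simp
    finally show "(\<Sum>t\<in>{t. t \<in> ?T \<and> ?f t = S}. h (?f t)) = 6 * h S" .
  qed simp
  finally show ?thesis by (simp add: sum_distrib_left)
qed

lemma G4:
  fixes h :: "'a set \<Rightarrow> int"
  assumes fin: "finite V" and C: "\<And>S. S\<in>C \<Longrightarrow> S \<subseteq> V \<and> card S = 4"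
  shows "(\<Sum>u\<in>V. \<Sum>v\<in>V. \<Sum>w\<in>V. \<Sum>x\<in>V. of_bool ({u,v,w,x} \<in> C) * h {u,v,w,x}) = 24 * (\<Sum>S\<in>C. h S)"
proof -
  let ?f = "\<lambda>t. case t of (u,v,w,x) \<Rightarrow> {u,v,w,x}"
  let ?T = "{t \<in> V\<times>V\<times>V\<times>V. ?f t \<in> C}"
  have fC: "finite C" using C fin by (meson Pow_iff finite_Pow_iff finite_subset subsetI)
  have "(\<Sum>u\<in>V. \<Sum>v\<in>V. \<Sum>w\<in>V. \<Sum>x\<in>V. of_bool ({u,v,w,x} \<in> C) * h {u,v,w,x})
      = (\<Sum>t\<in>V\<times>V\<times>V\<times>V. of_bool (?f t \<in> C) * h (?f t))"
    by (simp only: sum.cartesian_product split_def prod.case fst_conv snd_conv)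
  also have "\<dots> = (\<Sum>t\<in>V\<times>V\<times>V\<times>V. if ?f t \<in> C then h (?f t) else 0)"
    by (rule sum.cong) auto
  also have "\<dots> = (\<Sum>t\<in>?T. h (?f t))"
    by (rule sum.inter_filter[symmetric]) (use fin in auto)
  also have "\<dots> = (\<Sum>S\<in>C. \<Sum>t\<in>{t. t \<in> ?T \<and> ?f t = S}. h (?f t))"
    by (rule sum.group[symmetric]) (use fin fC in auto)
  also have "\<dots> = (\<Sum>S\<in>C. 24 * h S)"
  proof (rule sum.cong)
    fix S assume S: "S \<in> C"
    have eq: "{t. t \<in> ?T \<and> ?f t = S} = {t \<in> V\<times>V\<times>V\<times>V. ?f t = S}" using S by auto
    have "(\<Sum>t\<in>{t. t \<in> ?T \<and> ?f t = S}. h (?f t)) = (\<Sum>t\<in>{t \<in> V\<times>V\<times>V\<times>V. ?f t = S}. h S)"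
      unfolding eq by (rule sum.cong) auto
    also have "\<dots> = 24 * h S" using fiber4[of S V] C[OF S] by simp
    finally show "(\<Sum>t\<in>{t. t \<in> ?T \<and> ?f t = S}. h (?f t)) = 24 * h S" .
  qed simp
  finally show ?thesis by (simp add: sum_distrib_left)
qed

lemma G2:
  fixes h :: "'a set \<Rightarrow> int"
  assumes fin: "finite V" and C: "\<And>S. S\<in>C \<Longrightarrow> S \<subseteq> V \<and> card S = 2"
  shows "(\<Sum>u\<in>V. \<Sum>v\<in>V. of_bool ({u,v} \<in> C) * h {u,v}) = 2 * (\<Sum>S\<in>C. h S)"
proof -
  let ?f = "\<lambda>t. case t of (u,v) \<Rightarrow> {u,v}"
  let ?T = "{t \<in> V\<times>V. ?f t \<in> C}"
  have fC: "finite C" using C fin by (meson Pow_iff finite_Pow_iff finite_subset subsetI)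
  have "(\<Sum>u\<in>V. \<Sum>v\<in>V. of_bool ({u,v} \<in> C) * h {u,v})
      = (\<Sum>t\<in>V\<times>V. of_bool (?f t \<in> C) * h (?f t))"
    by (simp only: sum.cartesian_product split_def prod.case fst_conv snd_conv)
  also have "\<dots> = (\<Sum>t\<in>V\<times>V. if ?f t \<in> C then h (?f t) else 0)"
    by (rule sum.cong) auto
  also have "\<dots> = (\<Sum>t\<in>?T. h (?f t))"
    by (rule sum.inter_filter[symmetric]) (use fin in auto)
  also have "\<dots> = (\<Sum>S\<in>C. \<Sum>t\<in>{t. t \<in> ?T \<and> ?f t = S}. h (?f t))"
    by (rule sum.group[symmetric]) (use fin fC in auto)
  also have "\<dots> = (\<Sum>S\<in>C. 2 * h S)"
  proof (rule sum.cong)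
    fix S assume S: "S \<in> C"
    have eq: "{t. t \<in> ?T \<and> ?f t = S} = {t \<in> V\<times>V. ?f t = S}" using S by auto
    have "(\<Sum>t\<in>{t. t \<in> ?T \<and> ?f t = S}. h (?f t)) = (\<Sum>t\<in>{t \<in> V\<times>V. ?f t = S}. h S)"
      unfolding eq by (rule sum.cong) auto
    also have "\<dots> = 2 * h S" using fiber2[of S V] C[OF S] by simp
    finally show "(\<Sum>t\<in>{t. t \<in> ?T \<and> ?f t = S}. h (?f t)) = 2 * h S" .
  qed simp
  finally show ?thesis by (simp add: sum_distrib_left)
qed


locale sg = fixes V :: "'a set" and E :: "'a set set" assumes sg: "simple_graph V E"
begin

definition a :: "'a \<Rightarrow> 'a \<Rightarrow> int" where "a u v = of_bool ({u,v} \<in> E)"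

lemma finV: "finite V" using sg by (simp add: simple_graph_def)

lemma adjD: assumes "{u,v} \<in> E" shows "u \<in> V" "v \<in> V" "u \<noteq> v"
proof -
  have "{u,v} \<subseteq> V" "card {u,v} = 2" using sg assms by (auto simp: simple_graph_def)
  then show "u \<in> V" "v \<in> V" "u \<noteq> v" by auto
qed

lemma a_sym: "a u v = a v u" by (simp add: a_def insert_commute)

lemma Esub: "S \<in> E \<Longrightarrow> S \<subseteq> V \<and> card S = 2" using sg by (simp add: simple_graph_def)

lemma nb: "neighbours E v = {x\<in>V. {x,v} \<in> E}"
  using adjD by (auto simp: neighbours_def)

lemma deg: "int (degree E v) = (\<Sum>x\<in>V. a x v)"
  using finV by (simp add: degree_def nb a_def Int_def)

lemma common: "int (card (neighbours E u \<inter> neighbours E v)) = (\<Sum>w\<in>V. a w u * a w v)"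
proof -
  have "neighbours E u \<inter> neighbours E v = V \<inter> {w. {w,u} \<in> E \<and> {w,v} \<in> E}" by (auto simp: nb)
  then show ?thesis using finV by (simp add: a_def flip: of_bool_conj)
qed

lemma book: assumes "{u,v} \<in> E" shows "(\<Sum>w\<in>V. a w u * a w v) \<le> int (booksize V E)"
proof -
  let ?X = "{card (neighbours E u \<inter> neighbours E v) | u v. {u,v} \<in> E}"
  have "?X \<subseteq> {..card V}"
  proof
    fix k assume "k \<in> ?X"
    then obtain p q where "k = card (neighbours E p \<inter> neighbours E q)" by blast
    moreover have "neighbours E p \<inter> neighbours E q \<subseteq> V" by (auto simp: nb)
    ultimately show "k \<in> {..card V}" using finV card_mono by auto
  qed
  hence "finite (insert 0 ?X)" using finite_subset[OF _ finite_atMost] by blast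
  moreover have "card (neighbours E u \<inter> neighbours E v) \<in> insert 0 ?X" using assms by blast
  ultimately have "card (neighbours E u \<inter> neighbours E v) \<le> booksize V E"
    unfolding booksize_def by (rule Max_ge)
  then show ?thesis using common[of u v] by linarith
qed

lemma edges: "(\<Sum>u\<in>V. \<Sum>v\<in>V. a u v) = 2 * int (card E)"
  using G2[of V E "\<lambda>_. 1"] finV Esub by (simp add: a_def)

lemma tri_pt: assumes "u \<in> V" "v \<in> V" "w \<in> V"
  shows "a u v * a v w * a u w = of_bool ({u,v,w} \<in> cliques V E 3) * 1"
proof -
  have "({u,v} \<in> E \<and> {v,w} \<in> E \<and> {u,w} \<in> E) \<longleftrightarrow> {u,v,w} \<in> cliques V E 3"
  proof
    assume h: "{u,v} \<in> E \<and> {v,w} \<in> E \<and> {u,w} \<in> E"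
    then have d: "u \<noteq> v" "v \<noteq> w" "u \<noteq> w" using adjD by blast+
    show "{u,v,w} \<in> cliques V E 3" using h d assms
      unfolding cliques_def by (auto simp: insert_commute)
  next
    assume h: "{u,v,w} \<in> cliques V E 3"
    then have c: "card {u,v,w} = 3" by (simp add: cliques_def)
    then have d: "u \<noteq> v" "v \<noteq> w" "u \<noteq> w" by (auto simp: card_insert_if split: if_splits)
    then show "{u,v} \<in> E \<and> {v,w} \<in> E \<and> {u,w} \<in> E" using h unfolding cliques_def by blast
  qed
  then show ?thesis by (simp add: a_def flip: of_bool_conj)
qed

lemma tri: "(\<Sum>u\<in>V. \<Sum>v\<in>V. \<Sum>w\<in>V. a u v * a v w * a u w) = 6 * int (k_s V E 3)"
proof -
  have "(\<Sum>u\<in>V. \<Sum>v\<in>V. \<Sum>w\<in>V. a u v * a v w * a u w)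
     = (\<Sum>u\<in>V. \<Sum>v\<in>V. \<Sum>w\<in>V. of_bool ({u,v,w} \<in> cliques V E 3) * (\<lambda>_. 1) {u,v,w})"
    using tri_pt by simp
  also have "\<dots> = 6 * (\<Sum>S\<in>cliques V E 3. 1)"
    by (rule G3) (use finV in \<open>auto simp: cliques_def\<close>)
  finally show ?thesis by (simp add: k_s_def)
qed

lemma k4_pt: assumes "u \<in> V" "v \<in> V" "w \<in> V" "x \<in> V"
  shows "a u v * a v w * a u w * (a x u * a x v * a x w) = of_bool ({u,v,w,x} \<in> cliques V E 4) * 1"
proof -
  have "({u,v} \<in> E \<and> {v,w} \<in> E \<and> {u,w} \<in> E \<and> {x,u} \<in> E \<and> {x,v} \<in> E \<and> {x,w} \<in> E)
     \<longleftrightarrow> {u,v,w,x} \<in> cliques V E 4"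
  proof
    assume h: "{u,v} \<in> E \<and> {v,w} \<in> E \<and> {u,w} \<in> E \<and> {x,u} \<in> E \<and> {x,v} \<in> E \<and> {x,w} \<in> E"
    then have d: "u \<noteq> v" "v \<noteq> w" "u \<noteq> w" "x \<noteq> u" "x \<noteq> v" "x \<noteq> w" using adjD by blast+
    show "{u,v,w,x} \<in> cliques V E 4" using h d assms
      unfolding cliques_def by (auto simp: insert_commute)
  next
    assume h: "{u,v,w,x} \<in> cliques V E 4"
    then have c: "card {u,v,w,x} = 4" by (simp add: cliques_def)
    then have d: "u \<noteq> v" "v \<noteq> w" "u \<noteq> w" "x \<noteq> u" "x \<noteq> v" "x \<noteq> w"
      by (auto simp: card_insert_if split: if_splits)
    then show "{u,v} \<in> E \<and> {v,w} \<in> E \<and> {u,w} \<in> E \<and> {x,u} \<in> E \<and> {x,v} \<in> E \<and> {x,w} \<in> E"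
      using h unfolding cliques_def by blast
  qed
  then show ?thesis by (simp add: a_def flip: of_bool_conj)
qed

lemma k4: "(\<Sum>u\<in>V. \<Sum>v\<in>V. \<Sum>w\<in>V. \<Sum>x\<in>V. a u v * a v w * a u w * (a x u * a x v * a x w))
   = 24 * int (k_s V E 4)"
proof -
  have "(\<Sum>u\<in>V. \<Sum>v\<in>V. \<Sum>w\<in>V. \<Sum>x\<in>V. a u v * a v w * a u w * (a x u * a x v * a x w))
     = (\<Sum>u\<in>V. \<Sum>v\<in>V. \<Sum>w\<in>V. \<Sum>x\<in>V. of_bool ({u,v,w,x} \<in> cliques V E 4) * (\<lambda>_. 1) {u,v,w,x})"
    using k4_pt by simp
  also have "\<dots> = 24 * (\<Sum>S\<in>cliques V E 4. 1)"
    by (rule G4) (use finV in \<open>auto simp: cliques_def\<close>)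
  finally show ?thesis by (simp add: k_s_def)
qed

end
context sg begin

definition N :: "'a set \<Rightarrow> 'a set" where "N T = {x\<in>V. \<forall>t\<in>T. {x,t} \<notin> E}"

lemma clq3_other: assumes "T \<in> cliques V E 3" "x \<in> T" shows "\<exists>t\<in>T. t \<noteq> x"
proof (rule ccontr)
  assume "\<not> ?thesis"
  then have "T \<subseteq> {x}" by auto
  then have "card T \<le> 1" using card_mono[of "{x}" T] by simp
  then show False using assms by (simp add: cliques_def)
qed

lemma N_notin: assumes "T \<in> cliques V E 3" "w \<in> N T" shows "w \<notin> T"
proof
  assume "w \<in> T"
  then obtain t where "t \<in> T" "t \<noteq> w" using clq3_other assms by blast
  then have "{w,t} \<in> E" using assms \<open>w \<in> T\<close> by (auto simp: cliques_def)
  then show False using assms \<open>t \<in> T\<close> by (auto simp: N_def)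
qed

lemma k43_pt: assumes "u \<in> V" "v \<in> V" "w \<in> V"
  shows "a u v * a v w * a u w * (\<Sum>x\<in>V. (1 - a x u) * (1 - a x v) * (1 - a x w))
       = of_bool ({u,v,w} \<in> cliques V E 3) * int (card (N {u,v,w}))"
proof -
  have "(\<Sum>x\<in>V. (1 - a x u) * (1 - a x v) * (1 - a x w))
      = (\<Sum>x\<in>V. of_bool ({x,u} \<notin> E \<and> {x,v} \<notin> E \<and> {x,w} \<notin> E))"
    by (rule sum.cong) (auto simp: a_def)
  also have "\<dots> = int (card (N {u,v,w}))"
    using finV by (simp add: N_def Int_def)
  finally show ?thesis using tri_pt[OF assms] by simp
qed

lemma k43_sum: "(\<Sum>T\<in>cliques V E 3. int (card (N T))) = int (k4_3 V E)"
proof -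
  have fC: "finite (cliques V E 3)"
    by (rule finite_subset[of _ "Pow V"]) (use finV in \<open>auto simp: cliques_def\<close>)
  have fN: "\<And>T. finite (N T)" using finV by (simp add: N_def)
  let ?S = "Sigma (cliques V E 3) N"
  let ?K = "{S. S \<subseteq> V \<and> card S = 4 \<and>
      (\<exists>T w. S = insert w T \<and> w \<notin> T \<and> T \<in> cliques V E 3 \<and>
             (\<forall>t\<in>T. {w, t} \<notin> E))}"
  let ?g = "\<lambda>(T,w). insert w T"
  have "(\<Sum>T\<in>cliques V E 3. int (card (N T))) = int (card ?S)"
    using card_SigmaI[OF fC, of N] fN by simp
  also have "card ?S = card (?g ` ?S)"
  proof (rule card_image[symmetric], rule inj_onI)
    fix p q assume p: "p \<in> ?S" and q: "q \<in> ?S" and eq: "?g p = ?g q"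
    obtain T w where pT: "p = (T,w)" by (cases p)
    obtain T' w' where qT: "q = (T',w')" by (cases q)
    have T: "T \<in> cliques V E 3" "w \<in> N T" using p pT by auto
    have T': "T' \<in> cliques V E 3" "w' \<in> N T'" using q qT by auto
    have nw: "w \<notin> T" "w' \<notin> T'" using N_notin T T' by auto
    have ins: "insert w T = insert w' T'" using eq pT qT by simp
    show "p = q"
    proof (cases "w = w'")
      case True
      then have "T = T'" using ins nw by (metis Diff_insert_absorb)
      then show ?thesis using True pT qT by simp
    next
      case False
      then have "w \<in> T'" using ins by blast
      then obtain t where t: "t \<in> T'" "t \<noteq> w" using clq3_other T' by blast
      then have "{w,t} \<in> E" using T' \<open>w \<in> T'\<close> by (auto simp: cliques_def)
      moreover have "t \<in> T" using t ins nw by blast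
      ultimately show ?thesis using T by (auto simp: N_def)
    qed
  qed
  also have "?g ` ?S = ?K"
  proof
    show "?g ` ?S \<subseteq> ?K"
    proof
      fix S assume "S \<in> ?g ` ?S"
      then obtain T w where T: "T \<in> cliques V E 3" "w \<in> N T" and S: "S = insert w T" by auto
      have "w \<notin> T" using N_notin T by auto
      moreover have "T \<subseteq> V" "card T = 3" "finite T" using T by (auto simp: cliques_def intro: card_ge_0_finite)
      moreover have "w \<in> V" using T by (auto simp: N_def)
      ultimately show "S \<in> ?K" using S T
        by (auto simp: N_def insert_commute intro!: exI[of _ T] exI[of _ w])
    qed
    show "?K \<subseteq> ?g ` ?S"
    proof
      fix S assume "S \<in> ?K"
      then obtain T w where S: "S \<subseteq> V" "S = insert w T" "T \<in> cliques V E 3" "\<forall>t\<in>T. {w, t} \<notin> E"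
        by blast
      then have "(T,w) \<in> ?S" by (auto simp: N_def)
      then show "S \<in> ?g ` ?S" using S by force
    qed
  qed
  finally show ?thesis by (simp add: k4_3_def)
qed

lemma k43: "(\<Sum>u\<in>V. \<Sum>v\<in>V. \<Sum>w\<in>V. a u v * a v w * a u w * (\<Sum>x\<in>V. (1 - a x u) * (1 - a x v) * (1 - a x w)))
   = 6 * int (k4_3 V E)"
proof -
  have "(\<Sum>u\<in>V. \<Sum>v\<in>V. \<Sum>w\<in>V. a u v * a v w * a u w * (\<Sum>x\<in>V. (1 - a x u) * (1 - a x v) * (1 - a x w)))
     = (\<Sum>u\<in>V. \<Sum>v\<in>V. \<Sum>w\<in>V. of_bool ({u,v,w} \<in> cliques V E 3) * (\<lambda>T. int (card (N T))) {u,v,w})"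
    using k43_pt by simp
  also have "\<dots> = 6 * (\<Sum>T\<in>cliques V E 3. int (card (N T)))"
    by (rule G3) (use finV in \<open>auto simp: cliques_def\<close>)
  finally show ?thesis using k43_sum by simp
qed

end
context sg begin

definition d :: "'a \<Rightarrow> int" where "d v = (\<Sum>x\<in>V. a x v)"
definition c :: "'a \<Rightarrow> 'a \<Rightarrow> int" where "c u v = (\<Sum>w\<in>V. a w u * a w v)"
definition g :: "'a \<Rightarrow> 'a \<Rightarrow> 'a \<Rightarrow> int" where "g u v x = 1 - a x u - a x v + 2 * (a x u * a x v)"
definition A :: "'a \<Rightarrow> 'a \<Rightarrow> int" where "A u v = (\<Sum>x\<in>V. g u v x)"
definition t :: "'a \<Rightarrow> 'a \<Rightarrow> 'a \<Rightarrow> int" where "t u v w = a u v * a v w * a u w"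

lemma A_eq: "A u v = int (card V) - d u - d v + 2 * c u v"
  by (simp add: A_def g_def d_def c_def sum.distrib sum_subtractf sum_distrib_left)

lemma a01: "a u v = 0 \<or> a u v = 1" by (simp add: a_def)

lemma g_nonneg: "g u v x \<ge> 0"
  using a01[of x u] a01[of x v] by (auto simp: g_def)

lemma A_nonneg: "A u v \<ge> 0" unfolding A_def by (rule sum_nonneg) (simp add: g_nonneg)

lemma E1: "(\<Sum>u\<in>V. \<Sum>v\<in>V. a u v * A u v)
   = 2 * (6 * int (k_s V E 3) - (\<Sum>v\<in>V. int (degree E v) ^ 2) + int (card V) * int (card E))"
proof -
  have "(\<Sum>u\<in>V. \<Sum>v\<in>V. a u v * A u v)
     = (\<Sum>u\<in>V. \<Sum>v\<in>V. a u v * int (card V)) - (\<Sum>u\<in>V. \<Sum>v\<in>V. a u v * d u)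
       - (\<Sum>u\<in>V. \<Sum>v\<in>V. a u v * d v) + 2 * (\<Sum>u\<in>V. \<Sum>v\<in>V. a u v * c u v)"
    by (simp add: A_eq algebra_simps sum.distrib sum_subtractf sum_distrib_left)
  also have "(\<Sum>u\<in>V. \<Sum>v\<in>V. a u v * int (card V)) = int (card V) * (2 * int (card E))"
  proof -
    have "(\<Sum>u\<in>V. \<Sum>v\<in>V. a u v * int (card V)) = (\<Sum>u\<in>V. \<Sum>v\<in>V. a u v) * int (card V)"
      by (simp add: sum_distrib_right)
    then show ?thesis using edges by simp
  qed
  also have "(\<Sum>u\<in>V. \<Sum>v\<in>V. a u v * d u) = (\<Sum>u\<in>V. d u * d u)"
  proof (rule sum.cong)
    fix u assume "u \<in> V"
    have "(\<Sum>v\<in>V. a u v * d u) = (\<Sum>v\<in>V. a v u) * d u"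
      by (simp add: sum_distrib_right a_sym)
    then show "(\<Sum>v\<in>V. a u v * d u) = d u * d u" by (simp add: d_def)
  qed simp
  also have "(\<Sum>u\<in>V. \<Sum>v\<in>V. a u v * d v) = (\<Sum>v\<in>V. d v * d v)"
    by (subst sum.swap) (simp add: d_def sum_distrib_right[symmetric])
  also have "(\<Sum>u\<in>V. \<Sum>v\<in>V. a u v * c u v) = (\<Sum>u\<in>V. \<Sum>v\<in>V. \<Sum>w\<in>V. a u v * a v w * a u w)"
    unfolding c_def sum_distrib_left
  proof (intro sum.cong refl)
    fix u v w show "a u v * (a w u * a w v) = a u v * a v w * a u w"
      by (simp add: a_sym[of w u] a_sym[of w v])
  qed
  also have "\<dots> = 6 * int (k_s V E 3)" by (rule tri)
  also have "(\<Sum>v\<in>V. int (degree E v) ^ 2) = (\<Sum>v\<in>V. d v * d v)"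
    by (simp add: deg d_def power2_eq_square)
  ultimately show ?thesis by (simp add: algebra_simps)
qed

lemma E2: "(\<Sum>u\<in>V. \<Sum>v\<in>V. a u v * A u v * c u v)
   \<le> (\<Sum>u\<in>V. \<Sum>v\<in>V. a u v * A u v) * int (booksize V E)"
proof -
  have "(\<Sum>u\<in>V. \<Sum>v\<in>V. a u v * A u v * c u v) \<le> (\<Sum>u\<in>V. \<Sum>v\<in>V. a u v * A u v * int (booksize V E))"
  proof (intro sum_mono)
    fix u v
    show "a u v * A u v * c u v \<le> a u v * A u v * int (booksize V E)"
    proof (cases "{u,v} \<in> E")
      case True
      then have "c u v \<le> int (booksize V E)" using book by (simp add: c_def)
      moreover have "a u v * A u v \<ge> 0" using A_nonneg True by (simp add: a_def)
      ultimately show ?thesis by (simp add: mult_left_mono)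
    qed (simp add: a_def)
  qed
  then show ?thesis by (simp add: sum_distrib_right)
qed

lemma E3: "(\<Sum>u\<in>V. \<Sum>v\<in>V. a u v * A u v * c u v)
   = (\<Sum>u\<in>V. \<Sum>v\<in>V. \<Sum>w\<in>V. \<Sum>x\<in>V. t u v w * g u v x)"
proof (intro sum.cong refl)
  fix u v
  have "a u v * A u v * c u v = a u v * (c u v * A u v)" by simp
  also have "c u v * A u v = (\<Sum>w\<in>V. \<Sum>x\<in>V. a w u * a w v * g u v x)"
    by (simp only: c_def A_def sum_product)
  also have "a u v * (\<Sum>w\<in>V. \<Sum>x\<in>V. a w u * a w v * g u v x) = (\<Sum>w\<in>V. \<Sum>x\<in>V. a u v * (a w u * a w v * g u v x))"
    by (simp only: sum_distrib_left)
  also have "\<dots> = (\<Sum>w\<in>V. \<Sum>x\<in>V. t u v w * g u v x)"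
  proof (intro sum.cong refl)
    fix w x show "a u v * (a w u * a w v * g u v x) = t u v w * g u v x"
      by (simp add: t_def a_sym[of w u] a_sym[of w v])
  qed
  finally show "a u v * A u v * c u v = (\<Sum>w\<in>V. \<Sum>x\<in>V. t u v w * g u v x)" .
qed

end
context sg begin

lemma rot1: "(\<Sum>u\<in>V. \<Sum>v\<in>V. \<Sum>w\<in>V. \<Sum>x\<in>V. t u v w * g v w x)
  = (\<Sum>u\<in>V. \<Sum>v\<in>V. \<Sum>w\<in>V. \<Sum>x\<in>V. t u v w * g u v x)"
proof -
  have "(\<Sum>u\<in>V. \<Sum>v\<in>V. \<Sum>w\<in>V. \<Sum>x\<in>V. t u v w * g v w x)
      = (\<Sum>u\<in>V. \<Sum>v\<in>V. \<Sum>w\<in>V. \<Sum>x\<in>V. t v w u * g v w x)"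
  proof (intro sum.cong refl)
    fix u v w x show "t u v w * g v w x = t v w u * g v w x"
      by (simp add: t_def a_sym[of w u] a_sym[of v u] mult_ac)
  qed
  also have "\<dots> = (\<Sum>v\<in>V. \<Sum>u\<in>V. \<Sum>w\<in>V. \<Sum>x\<in>V. t v w u * g v w x)" by (rule sum.swap)
  also have "\<dots> = (\<Sum>v\<in>V. \<Sum>w\<in>V. \<Sum>u\<in>V. \<Sum>x\<in>V. t v w u * g v w x)"
    by (rule sum.cong[OF refl], rule sum.swap)
  finally show ?thesis .
qed

lemma rot2: "(\<Sum>u\<in>V. \<Sum>v\<in>V. \<Sum>w\<in>V. \<Sum>x\<in>V. t u v w * g u w x)
  = (\<Sum>u\<in>V. \<Sum>v\<in>V. \<Sum>w\<in>V. \<Sum>x\<in>V. t u v w * g u v x)"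
proof -
  have "(\<Sum>u\<in>V. \<Sum>v\<in>V. \<Sum>w\<in>V. \<Sum>x\<in>V. t u v w * g u w x)
      = (\<Sum>u\<in>V. \<Sum>v\<in>V. \<Sum>w\<in>V. \<Sum>x\<in>V. t u w v * g u w x)"
  proof (intro sum.cong refl)
    fix u v w x show "t u v w * g u w x = t u w v * g u w x"
      by (simp add: t_def a_sym[of w v] mult_ac)
  qed
  also have "\<dots> = (\<Sum>u\<in>V. \<Sum>w\<in>V. \<Sum>v\<in>V. \<Sum>x\<in>V. t u w v * g u w x)"
    by (rule sum.cong[OF refl], rule sum.swap)
  finally show ?thesis .
qed

lemma E4: "3 * (\<Sum>u\<in>V. \<Sum>v\<in>V. \<Sum>w\<in>V. \<Sum>x\<in>V. t u v w * g u v x)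
  = int (card V) * (6 * int (k_s V E 3)) + 2 * (24 * int (k_s V E 4)) + 2 * (6 * int (k4_3 V E))"
proof -
  let ?p = "\<lambda>u v w x. a x u * a x v * a x w"
  let ?q = "\<lambda>u v w x. (1 - a x u) * (1 - a x v) * (1 - a x w)"
  have "3 * (\<Sum>u\<in>V. \<Sum>v\<in>V. \<Sum>w\<in>V. \<Sum>x\<in>V. t u v w * g u v x)
    = (\<Sum>u\<in>V. \<Sum>v\<in>V. \<Sum>w\<in>V. \<Sum>x\<in>V. t u v w * g u v x)
      + (\<Sum>u\<in>V. \<Sum>v\<in>V. \<Sum>w\<in>V. \<Sum>x\<in>V. t u v w * g v w x)
      + (\<Sum>u\<in>V. \<Sum>v\<in>V. \<Sum>w\<in>V. \<Sum>x\<in>V. t u v w * g u w x)"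
    by (simp add: rot1 rot2)
  also have "\<dots> = (\<Sum>u\<in>V. \<Sum>v\<in>V. \<Sum>w\<in>V. \<Sum>x\<in>V. t u v w * (g u v x + g v w x + g u w x))"
    by (simp only: distrib_left sum.distrib)
  also have "\<dots> = (\<Sum>u\<in>V. \<Sum>v\<in>V. \<Sum>w\<in>V. \<Sum>x\<in>V. t u v w + 2 * (t u v w * ?p u v w x) + 2 * (t u v w * ?q u v w x))"
  proof (intro sum.cong refl)
    fix u v w x show "t u v w * (g u v x + g v w x + g u w x) = t u v w + 2 * (t u v w * ?p u v w x) + 2 * (t u v w * ?q u v w x)"
      by (simp add: g_def algebra_simps)
  qed
  also have "\<dots> = (\<Sum>u\<in>V. \<Sum>v\<in>V. \<Sum>w\<in>V. \<Sum>x\<in>V. t u v w) + 2 * (\<Sum>u\<in>V. \<Sum>v\<in>V. \<Sum>w\<in>V. \<Sum>x\<in>V. t u v w * ?p u v w x)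
      + 2 * (\<Sum>u\<in>V. \<Sum>v\<in>V. \<Sum>w\<in>V. t u v w * (\<Sum>x\<in>V. ?q u v w x))"
    by (simp only: sum.distrib sum_distrib_left)
  also have "(\<Sum>u\<in>V. \<Sum>v\<in>V. \<Sum>w\<in>V. \<Sum>x\<in>V. t u v w) = int (card V) * (\<Sum>u\<in>V. \<Sum>v\<in>V. \<Sum>w\<in>V. t u v w)"
    by (simp add: sum_distrib_left)
  also have "(\<Sum>u\<in>V. \<Sum>v\<in>V. \<Sum>w\<in>V. t u v w) = 6 * int (k_s V E 3)"
    using tri by (simp add: t_def)
  also have "(\<Sum>u\<in>V. \<Sum>v\<in>V. \<Sum>w\<in>V. \<Sum>x\<in>V. t u v w * ?p u v w x) = 24 * int (k_s V E 4)"
    using k4 by (simp add: t_def)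
  also have "(\<Sum>u\<in>V. \<Sum>v\<in>V. \<Sum>w\<in>V. t u v w * (\<Sum>x\<in>V. ?q u v w x)) = 6 * int (k4_3 V E)"
    using k43 by (simp add: t_def)
  finally show ?thesis .
qed

end

theorem theorem1:
  fixes V :: "'a set" and E :: "'a set set"
  assumes "simple_graph V E"
  shows "(6 * int (k_s V E 3) - (\<Sum>v\<in>V. int (degree E v) ^ 2) + int (card V) * int (card E))
           * int (booksize V E)
         \<ge> int (card V) * int (k_s V E 3) + 8 * int (k_s V E 4) + 2 * int (k4_3 V E)"
proof -
  interpret sg V E using assms by unfold_locales
  define F where "F = 6 * int (k_s V E 3) - (\<Sum>v\<in>V. int (degree E v) ^ 2) + int (card V) * int (card E)"
  define S where "S = (\<Sum>u\<in>V. \<Sum>v\<in>V. \<Sum>w\<in>V. \<Sum>x\<in>V. t u v w * g u v x)"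
  have "S \<le> (2 * F) * int (booksize V E)" using E1 E2 E3 unfolding S_def F_def by simp
  moreover have "3 * S = int (card V) * (6 * int (k_s V E 3)) + 2 * (24 * int (k_s V E 4)) + 2 * (6 * int (k4_3 V E))"
    unfolding S_def by (rule E4)
  ultimately have "int (card V) * int (k_s V E 3) + 8 * int (k_s V E 4) + 2 * int (k4_3 V E) \<le> F * int (booksize V E)"
    by (simp add: algebra_simps)
  then show ?thesis unfolding F_def .
qed


end
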